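(* Let $\mathscr{L}$ be the rooted transition system with a single state $a$, transition $a\to a$, and initial state $a$, and let $\mathscr{C}$ be the rooted transition system with states $\{x,y\}$, transitions $x\to y$, $y\to x$, and initial state $x$. Then $R=\{(a,x),(a,y)\}$ is a relational bisimulation between $\mathscr{L}$ and $\mathscr{C}$ containing the pair of initial states, but there is no functional bisimulation between $\mathscr{L}$ and $\mathscr{C}$. In particular, functional bisimulation is strictly stronger than relational bisimulation.
   Context: A rooted transition system consists of a set of states, a binary transition relation $\to$, and an initial state. A simulation $f:\mathscr{M}\to\mathscr{N}$ is a function on states with $s\to s'$ implying $f(s)\to f(s')$ and preserving initial states. A relational bisimulation between $\mathscr{M}$ and $\mathscr{N}$ is a relation $R$ between their states satisfying: if $(s,t)\in R$ and $s\to s'$ then there is $t'$ with $t\to t'$ and $(s',t')\in R$; and if $(s,t)\in R$ and $t\to t'$ then there is $s'$ with $s\to s'$ and $(s',t')\in R$. Two states $s,t$ of a system are path-equivalent, $s\sim t$, if for all states $u$: $s\to^*u\iff t\to^*u$ and $u\to^*s\iff u\to^*t$ ($\to^*$ the reflexive-transitive closure). A functional bisimulation between $\mathscr{M}$ and $\mathscr{N}$ is a pair of simulations $f:\mathscr{M}\to\mathscr{N}$, $g:\mathscr{N}\to\mathscr{M}$ with $gf(s)\sim s$ for all states $s$ of $\mathscr{M}$ and $fg(t)\sim t$ for all states $t$ of $\mathscr{N}$. Every functional bisimulation yields a relational bisimulation. *)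

theory Defs
  imports Main
begin

record 's rts =
  states :: "'s set"
  trans :: "'s \<Rightarrow> 's \<Rightarrow> bool"
  init :: 's

definition wf_rts :: "'s rts \<Rightarrow> bool" where
  "wf_rts M \<longleftrightarrow> init M \<in> states M \<and>
     (\<forall>s t. trans M s t \<longrightarrow> s \<in> states M \<and> t \<in> states M)"

definition simulation :: "'s rts \<Rightarrow> 't rts \<Rightarrow> ('s \<Rightarrow> 't) \<Rightarrow> bool" where
  "simulation M N f \<longleftrightarrow>
     (\<forall>s\<in>states M. f s \<in> states N) \<and>
     (\<forall>s\<in>states M. \<forall>s'\<in>states M. trans M s s' \<longrightarrow> trans N (f s) (f s')) \<and>
     f (init M) = init N"

definition rel_bisim :: "'s rts \<Rightarrow> 't rts \<Rightarrow> ('s \<times> 't) set \<Rightarrow> bool" where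
  "rel_bisim M N R \<longleftrightarrow>
     R \<subseteq> states M \<times> states N \<and>
     (\<forall>(s,t)\<in>R. \<forall>s'. trans M s s' \<longrightarrow> (\<exists>t'. trans N t t' \<and> (s',t') \<in> R)) \<and>
     (\<forall>(s,t)\<in>R. \<forall>t'. trans N t t' \<longrightarrow> (\<exists>s'. trans M s s' \<and> (s',t') \<in> R))"

abbreviation reach :: "'s rts \<Rightarrow> 's \<Rightarrow> 's \<Rightarrow> bool" where
  "reach M \<equiv> (trans M)\<^sup>*\<^sup>*"

definition path_equiv :: "'s rts \<Rightarrow> 's \<Rightarrow> 's \<Rightarrow> bool" where
  "path_equiv M s t \<longleftrightarrow>
     (\<forall>u\<in>states M. (reach M s u \<longleftrightarrow> reach M t u) \<and> (reach M u s \<longleftrightarrow> reach M u t))"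

definition fun_bisim :: "'s rts \<Rightarrow> 't rts \<Rightarrow> ('s \<Rightarrow> 't) \<Rightarrow> ('t \<Rightarrow> 's) \<Rightarrow> bool" where
  "fun_bisim M N f g \<longleftrightarrow>
     simulation M N f \<and> simulation N M g \<and>
     (\<forall>s\<in>states M. path_equiv M (g (f s)) s) \<and>
     (\<forall>t\<in>states N. path_equiv N (f (g t)) t)"

datatype Lstate = a
datatype Cstate = x | y

definition L_sys :: "Lstate rts" where
  "L_sys = \<lparr>states = {a}, trans = (\<lambda>s t. s = a \<and> t = a), init = a\<rparr>"

definition C_sys :: "Cstate rts" where
  "C_sys = \<lparr>states = {x, y},
            trans = (\<lambda>s t. (s = x \<and> t = y) \<or> (s = y \<and> t = x)), init = x\<rparr>"

end

theory Submission
  imports Defs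
begin

theorem mainTheorem3:
  shows "rel_bisim L_sys C_sys {(a, x), (a, y)}
       \<and> (init L_sys, init C_sys) \<in> {(a, x), (a, y)}
       \<and> \<not> (\<exists>f g. fun_bisim L_sys C_sys f g)"
proof (intro conjI)
  show "rel_bisim L_sys C_sys {(a, x), (a, y)}"
    unfolding rel_bisim_def L_sys_def C_sys_def by auto
  show "(init L_sys, init C_sys) \<in> {(a, x), (a, y)}"
    by (simp add: L_sys_def C_sys_def)
  show "\<not> (\<exists>f g. fun_bisim L_sys C_sys f g)"
  proof
    assume "\<exists>f g. fun_bisim L_sys C_sys f g"
    then obtain f g where "fun_bisim L_sys C_sys f g" by blast
    then have "simulation L_sys C_sys f" by (simp add: fun_bisim_def)
    then have "f a = x" and "trans C_sys (f a) (f a)"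
      unfolding simulation_def L_sys_def C_sys_def by auto
    then show False by (simp add: C_sys_def)
  qed
qed

end
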